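(* Let $h_{s,r}$ be a Hermitian operator on $\mathcal H_s\otimes\mathcal H_r\cong\mathbb C^2\otimes\mathbb C^2$ (qubits $s$ and $r$) which is not $(s,\eta)$-gapped. Then there exists a Hermitian operator $\hat h_r$ acting nontrivially only on qubit $r$ (i.e. of the form $I_s\otimes g_r$) such that $\|h_{s,r}-\hat h_r\|\le 4\eta$.
   Context: Pauli matrices: $\sigma^{(0)}=I$, $\sigma^{(1)}=X=\begin{pmatrix}0&1\\1&0\end{pmatrix}$, $\sigma^{(2)}=Y=\begin{pmatrix}0&-i\\i&0\end{pmatrix}$, $\sigma^{(3)}=Z=\begin{pmatrix}1&0\\0&-1\end{pmatrix}$. Every operator on two qubits $s,r$ has a unique local Pauli decomposition $h_{s,r}=\sum_{\alpha=0}^3 A_s^{(\alpha)}\otimes\sigma_r^{(\alpha)}$ with $A_s^{(\alpha)}\in\mathbb C^{2\times2}$ (Hermitian when $h_{s,r}$ is). For Hermitian $A\in\mathbb C^{2\times2}$, $\Delta(A)=\lambda_{\max}(A)-\lambda_{\min}(A)$ is its spectral gap. A Hermitian $h_{s,r}$ is $(s,\eta)$-gapped if some $A_s^{(\alpha)}$ in this decomposition satisfies $\Delta(A_s^{(\alpha)})\ge\eta$. $\|\cdot\|$ is the operator norm. *)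

theory Defs
  imports "HOL-Analysis.Analysis"
begin

text \<open>Two-qubit operators on H_s (x) H_r: matrices indexed by 2 \<times> 2, where the first
  component of the index is qubit s and the second is qubit r.\<close>

type_synonym qop = "complex^2^2"
type_synonym qqop = "complex^(2 \<times> 2)^(2 \<times> 2)"

definition mat2 :: "complex \<Rightarrow> complex \<Rightarrow> complex \<Rightarrow> complex \<Rightarrow> qop" where
  "mat2 a b c d = (\<chi> i j. if i = 0 then (if j = 0 then a else b) else (if j = 0 then c else d))"

definition pauli :: "nat \<Rightarrow> qop" where
  "pauli k = (if k = 0 then mat2 1 0 0 1
              else if k = 1 then mat2 0 1 1 0
              else if k = 2 then mat2 0 (- \<i>) \<i> 0
              else mat2 1 0 0 (-1))"

definition kron :: "complex^'a^'b \<Rightarrow> complex^'c^'d \<Rightarrow> complex^('a \<times> 'c)^('b \<times> 'd)" where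
  "kron A B = (\<chi> p q. A $ fst p $ fst q * B $ snd p $ snd q)"

definition hermitian :: "complex^'n^'n \<Rightarrow> bool" where
  "hermitian A \<longleftrightarrow> (\<forall>i j. A $ i $ j = cnj (A $ j $ i))"

text \<open>Real eigenvalues (for Hermitian matrices these are all eigenvalues).\<close>
definition real_eigenvalues :: "complex^'n^'n \<Rightarrow> real set" where
  "real_eigenvalues A = {l. \<exists>v. v \<noteq> 0 \<and> A *v v = complex_of_real l *s v}"

definition spectral_gap :: "complex^'n^'n \<Rightarrow> real" where
  "spectral_gap A = Max (real_eigenvalues A) - Min (real_eigenvalues A)"

text \<open>h is (s,eta)-gapped: in the (unique) local Pauli decomposition
  h = sum_alpha A^(alpha)_s (x) sigma^(alpha)_r some A^(alpha) has gap \<ge> eta.\<close>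
definition gapped :: "qqop \<Rightarrow> real \<Rightarrow> bool" where
  "gapped h \<eta> \<longleftrightarrow> (\<exists>A :: nat \<Rightarrow> qop.
      h = (\<Sum>\<alpha><4. kron (A \<alpha>) (pauli \<alpha>)) \<and> (\<exists>\<alpha><4. spectral_gap (A \<alpha>) \<ge> \<eta>))"

definition opnorm :: "complex^'n^'m \<Rightarrow> real" where
  "opnorm M = onorm (\<lambda>x. M *v x)"

end

theory Submission
  imports Defs
begin

lemma two0: "(2::2) = 0" by simp
lemma ex2: "(x::2) = 0 \<or> x = 1" using exhaust_2[of x] two0 by auto
lemma UNIV2: "(UNIV::2 set) = {0,1}"
  using ex2 by auto
lemma forall2: "(\<forall>i::2. P i) \<longleftrightarrow> P 0 \<and> P 1"
  by (metis ex2)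
lemma sum2: "(\<Sum>i\<in>(UNIV::2 set). f i) = f 0 + f 1"
  by (simp add: UNIV2)
lemma mv2: "((M::qop) *v v) $ i = M$i$0 * v$0 + M$i$1 * v$1"
  by (simp add: matrix_vector_mult_def sum2)

lemma herm_diag: "hermitian (M::complex^'n^'n) \<Longrightarrow> M$i$i = complex_of_real (Re (M$i$i))"
proof -
  assume "hermitian M"
  then have "M$i$i = cnj (M$i$i)" unfolding hermitian_def by blast
  then have "Im (M$i$i) = 0" by (metis cnj.sel(2) neg_equal_zero)
  then show ?thesis by (simp add: complex_eq_iff)
qed

lemma eig_sub:
  fixes M :: qop
  assumes H: "hermitian M"
  defines "p \<equiv> Re (M$0$0)" and "q \<equiv> Re (M$1$1)"
  defines "r \<equiv> sqrt (((p-q)/2)^2 + (cmod (M$0$1))^2)"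
  shows "real_eigenvalues M \<subseteq> {(p+q)/2 + r, (p+q)/2 - r}"
proof
  fix l assume "l \<in> real_eigenvalues M"
  then obtain v where v: "v \<noteq> 0" "M *v v = complex_of_real l *s v"
    unfolding real_eigenvalues_def by auto
  have e0: "M$0$0 * v$0 + M$0$1 * v$1 = l * v$0"
    using arg_cong[OF v(2), of "\<lambda>w. w$0"] by (simp only: mv2 vector_smult_component)
  have e1: "M$1$0 * v$0 + M$1$1 * v$1 = l * v$1"
    using arg_cong[OF v(2), of "\<lambda>w. w$1"] by (simp only: mv2 vector_smult_component)
  have h00: "M$0$0 = p" unfolding p_def using H by (rule herm_diag)
  have h11: "M$1$1 = q" unfolding q_def using H by (rule herm_diag)
  have h10: "M$1$0 = cnj (M$0$1)" using H[unfolded hermitian_def, rule_format, of 1 0] .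
  define b where "b = M$0$1"
  have bb: "b * cnj b = (cmod b)^2" by (metis complex_norm_square of_real_power)
  have E0: "(p - l) * v$0 + b * v$1 = 0" using e0 h00 b_def by (simp add: algebra_simps)
  have E1: "cnj b * v$0 + (q - l) * v$1 = 0" using e1 h11 h10 b_def by (simp add: algebra_simps)
  have bb': "complex_of_real ((cmod b)^2) = b * cnj b" using bb by simp
  define d where "d = complex_of_real ((p-l)*(q-l) - (cmod b)^2)"
  have d0: "d * v$0 = 0"
  proof -
    have "d * v$0 = (q - l) * ((p - l) * v$0 + b * v$1) - b * (cnj b * v$0 + (q - l) * v$1)"
      unfolding d_def of_real_diff of_real_mult bb' by (simp add: algebra_simps)
    then show ?thesis using E0 E1 by simp
  qed
  have d1: "d * v$1 = 0"
  proof -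
    have "d * v$1 = (p - l) * (cnj b * v$0 + (q - l) * v$1) - cnj b * ((p - l) * v$0 + b * v$1)"
      unfolding d_def of_real_diff of_real_mult bb' by (simp add: algebra_simps)
    then show ?thesis using E0 E1 by simp
  qed
  have "v$0 \<noteq> 0 \<or> v$1 \<noteq> 0" using v(1) unfolding vec_eq_iff forall2 by simp
  then have "d = 0" using d0 d1 by auto
  then have "(p-l)*(q-l) - (cmod b)^2 = 0" unfolding d_def by (simp only: of_real_eq_0_iff)
  then have dq: "(p-l)*(q-l) = (cmod b)^2" by simp
  have r2: "r^2 = ((p-q)/2)^2 + (cmod b)^2" unfolding r_def b_def by simp
  have "(l - (p+q)/2)^2 = r^2" unfolding r2
  proof -
    have "(l - (p+q)/2)^2 - (((p-q)/2)^2 + (cmod b)^2) = (p-l)*(q-l) - (cmod b)^2"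
      by (simp add: power2_eq_square field_simps)
    then show "(l - (p+q)/2)^2 = ((p-q)/2)^2 + (cmod b)^2" using dq by simp
  qed
  then have "l - (p+q)/2 = r \<or> l - (p+q)/2 = - r"
    by (metis power2_eq_iff)
  then show "l \<in> {(p+q)/2 + r, (p+q)/2 - r}" by auto
qed
lemma eig_mem:
  fixes M :: qop
  assumes H: "hermitian M"
  defines "p \<equiv> Re (M$0$0)" and "q \<equiv> Re (M$1$1)"
  assumes L: "(l - p) * (l - q) = (cmod (M$0$1))^2"
  shows "l \<in> real_eigenvalues M"
proof -
  have h00: "M$0$0 = p" unfolding p_def using H by (rule herm_diag)
  have h11: "M$1$1 = q" unfolding q_def using H by (rule herm_diag)
  have h10: "M$1$0 = cnj (M$0$1)" using H[unfolded hermitian_def, rule_format, of 1 0] .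
  define b where "b = M$0$1"
  have bb: "b * cnj b = (cmod b)^2" by (metis complex_norm_square of_real_power)
  have L': "(complex_of_real l - p) * (l - q) = b * cnj b"
    unfolding bb b_def[symmetric] using L[folded b_def] by (metis of_real_diff of_real_mult)
  define v :: "complex^2" where
    "v = (if b = 0 \<and> l = p then (\<chi> i. if i = 0 then 1 else 0)
          else (\<chi> i. if i = 0 then b else l - p))"
  have v0: "v \<noteq> 0" unfolding v_def vec_eq_iff forall2 by auto
  have "M *v v = complex_of_real l *s v"
  proof (cases "b = 0 \<and> l = p")
    case True
    then show ?thesis unfolding v_def vec_eq_iff forall2 mv2 using h00 h10 b_def by simp
  next
    case False
    have r1: "cnj b * b + q * (l - p) = l * (l - p)"
      using L' by (simp add: algebra_simps)
    show ?thesis unfolding v_def vec_eq_iff forall2 mv2 using False h00 h10 h11 b_def r1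
      by (simp add: algebra_simps)
  qed
  then show ?thesis unfolding real_eigenvalues_def using v0 by blast
qed

lemma norm_sq_vec: "(norm (x::complex^'n))^2 = (\<Sum>i\<in>UNIV. (cmod (x$i))^2)"
  unfolding norm_vec_def L2_set_def by (simp add: sum_nonneg)

lemma opnorm_entry_bound:
  fixes M :: "complex^'n^'m"
  assumes B: "\<And>i j. cmod (M$i$j) \<le> e"
  shows "opnorm M \<le> e * sqrt (real (CARD('m) * CARD('n)))"
proof -
  have e0: "e \<ge> 0" using B[of undefined undefined] norm_ge_zero order_trans by blast
  have key: "norm (M *v x) \<le> e * sqrt (real (CARD('m) * CARD('n))) * norm x" for x
  proof -
    define S where "S = (\<Sum>j\<in>UNIV. cmod (x$j))"
    have S0: "S \<ge> 0" unfolding S_def by (simp add: sum_nonneg)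
    have CS: "S^2 \<le> real CARD('n) * (norm x)^2"
    proof -
      have "S^2 = (\<Sum>j\<in>UNIV. 1 * cmod (x$j))^2" unfolding S_def by simp
      also have "\<dots> \<le> (\<Sum>j\<in>(UNIV::'n set). 1^2) * (\<Sum>j\<in>UNIV. (cmod (x$j))^2)"
        by (rule Cauchy_Schwarz_ineq_sum)
      also have "\<dots> = real CARD('n) * (norm x)^2" by (simp add: norm_sq_vec)
      finally show ?thesis .
    qed
    have row: "cmod ((M *v x)$i) \<le> e * S" for i
    proof -
      have "cmod ((M *v x)$i) = cmod (\<Sum>j\<in>UNIV. M$i$j * x$j)"
        by (simp add: matrix_vector_mult_def)
      also have "\<dots> \<le> (\<Sum>j\<in>UNIV. cmod (M$i$j * x$j))" by (rule norm_sum)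
      also have "\<dots> \<le> (\<Sum>j\<in>UNIV. e * cmod (x$j))"
        by (rule sum_mono) (simp add: norm_mult mult_right_mono B)
      also have "\<dots> = e * S" unfolding S_def by (simp add: sum_distrib_left)
      finally show ?thesis .
    qed
    have "(norm (M *v x))^2 = (\<Sum>i\<in>UNIV. (cmod ((M *v x)$i))^2)" by (rule norm_sq_vec)
    also have "\<dots> \<le> (\<Sum>i\<in>(UNIV::'m set). (e * S)^2)"
      by (rule sum_mono) (simp add: power_mono row)
    also have "\<dots> = real CARD('m) * e^2 * S^2" by (simp add: power_mult_distrib)
    also have "\<dots> \<le> real CARD('m) * e^2 * (real CARD('n) * (norm x)^2)"
      by (rule mult_left_mono[OF CS]) simp
    also have "\<dots> = (e * sqrt (real (CARD('m) * CARD('n))) * norm x)^2"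
      by (simp add: power_mult_distrib)
    finally have "(norm (M *v x))^2 \<le> (e * sqrt (real (CARD('m) * CARD('n))) * norm x)^2" .
    then show ?thesis
      by (rule power2_le_imp_le) (simp add: e0)
  qed
  show ?thesis unfolding opnorm_def by (rule onorm_le) (rule key)
qed

lemma gap_eq:
  fixes M :: qop
  assumes H: "hermitian M"
  defines "p \<equiv> Re (M$0$0)" and "q \<equiv> Re (M$1$1)"
  defines "r \<equiv> sqrt (((p-q)/2)^2 + (cmod (M$0$1))^2)"
  shows "spectral_gap M = 2 * r"
proof -
  have r2: "r^2 = ((p-q)/2)^2 + (cmod (M$0$1))^2" unfolding r_def by simp
  have r0: "r \<ge> 0" unfolding r_def by simp
  have m1: "(p+q)/2 + r \<in> real_eigenvalues M"
    unfolding p_def q_def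
    by (rule eig_mem[OF H]) (use r2 in \<open>simp add: p_def q_def power2_eq_square field_simps\<close>)
  have m2: "(p+q)/2 - r \<in> real_eigenvalues M"
    unfolding p_def q_def
    by (rule eig_mem[OF H]) (use r2 in \<open>simp add: p_def q_def power2_eq_square field_simps\<close>)
  have "real_eigenvalues M = {(p+q)/2 + r, (p+q)/2 - r}"
    using eig_sub[OF H] m1 m2 unfolding p_def q_def r_def by blast
  then show ?thesis unfolding spectral_gap_def using r0 by (simp add: max_def min_def)
qed

lemma gap_bound:
  fixes M :: qop
  assumes H: "hermitian M" and G: "spectral_gap M < \<eta>"
  shows "cmod (M$0$1) < \<eta>/2" "\<bar>Re (M$0$0) - Re (M$1$1)\<bar> / 2 < \<eta>/2"
proof -
  define r where "r = sqrt (((Re (M$0$0) - Re (M$1$1))/2)^2 + (cmod (M$0$1))^2)"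
  have "2 * r < \<eta>" using gap_eq[OF H] G unfolding r_def by simp
  moreover have "cmod (M$0$1) \<le> r" unfolding r_def by (rule real_le_rsqrt) simp
  moreover have "\<bar>Re (M$0$0) - Re (M$1$1)\<bar> / 2 \<le> r" unfolding r_def
    by (rule real_le_rsqrt) (simp add: power_divide)
  ultimately show "cmod (M$0$1) < \<eta>/2" "\<bar>Re (M$0$0) - Re (M$1$1)\<bar> / 2 < \<eta>/2" by auto
qed

lemma sum4: "(\<Sum>\<beta><(4::nat). f \<beta>) = f 0 + f 1 + f 2 + (f 3 :: 'a::comm_monoid_add)"
  by (simp add: eval_nat_numeral ac_simps)

lemma pauli_ent:
  "pauli 0 $ 0 $ 0 = 1" "pauli 0 $ 0 $ 1 = 0" "pauli 0 $ 1 $ 0 = 0" "pauli 0 $ 1 $ 1 = 1"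
  "pauli 1 $ 0 $ 0 = 0" "pauli 1 $ 0 $ 1 = 1" "pauli 1 $ 1 $ 0 = 1" "pauli 1 $ 1 $ 1 = 0"
  "pauli 2 $ 0 $ 0 = 0" "pauli 2 $ 0 $ 1 = -\<i>" "pauli 2 $ 1 $ 0 = \<i>" "pauli 2 $ 1 $ 1 = 0"
  "pauli 3 $ 0 $ 0 = 1" "pauli 3 $ 0 $ 1 = 0" "pauli 3 $ 1 $ 0 = 0" "pauli 3 $ 1 $ 1 = -1"
  by (simp_all add: pauli_def mat2_def)

lemma pauli_Suc0: "pauli (Suc 0) $ 0 $ 0 = 0" "pauli (Suc 0) $ 0 $ 1 = 1" "pauli (Suc 0) $ 1 $ 0 = 1" "pauli (Suc 0) $ 1 $ 1 = 0"
  by (simp_all add: pauli_def mat2_def)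

lemma pauli_herm: "pauli k $ r2 $ r1 = cnj (pauli k $ r1 $ r2)"
  using ex2[of r1] ex2[of r2] by (auto simp: pauli_def mat2_def)

lemma pauli_sum_bound:
  assumes "\<And>\<beta>. \<beta> < 4 \<Longrightarrow> cmod (f \<beta>) < e"
  shows "cmod (\<Sum>\<beta><4. f \<beta> * pauli \<beta> $ r1 $ r2) < 2 * e"
proof -
  have f: "cmod (f 0) < e" "cmod (f 1) < e" "cmod (f 2) < e" "cmod (f 3) < e"
    using assms by auto
  have t: "cmod (a + b) < 2 * e" if "cmod a < e" "cmod b < e" for a b :: complex
    using norm_triangle_ineq[of a b] that by linarith
  consider "r1 = 0" "r2 = 0" | "r1 = 0" "r2 = 1" | "r1 = 1" "r2 = 0" | "r1 = 1" "r2 = 1"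
    using ex2[of r1] ex2[of r2] by blast
  then show ?thesis
  proof cases
    case 1 then show ?thesis using t[OF f(1) f(4)] by (simp add: sum4 pauli_ent pauli_Suc0)
  next
    case 2 then show ?thesis using t[of "f 1" "- (f 2 * \<i>)"] f by (simp add: sum4 pauli_ent pauli_Suc0 norm_mult)
  next
    case 3 then show ?thesis using t[of "f 1" "f 2 * \<i>"] f by (simp add: sum4 pauli_ent pauli_Suc0 norm_mult)
  next
    case 4 then show ?thesis using t[of "f 0" "- f 3"] f by (simp add: sum4 pauli_ent pauli_Suc0)
  qed
qed

lemma ex22: "\<exists>i r. (p::2\<times>2) = (i, r)" by auto

theorem theorem4p5:
  fixes h :: qqop and \<eta> :: real
  assumes "hermitian h"
    and "\<not> gapped h \<eta>"
  shows "\<exists>g :: qop. hermitian g \<and> opnorm (h - kron (mat 1) g) \<le> 4 * \<eta>"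
proof -
  note H = assms(1)[unfolded hermitian_def, rule_format]
  define A :: "nat \<Rightarrow> qop" where
    "A \<beta> = (\<chi> i j. (\<Sum>r1\<in>UNIV. \<Sum>r2\<in>UNIV. h$(i,r1)$(j,r2) * cnj (pauli \<beta> $ r1 $ r2)) / 2)" for \<beta>
  have F1: "h$(i,r1)$(j,r2) = (\<Sum>\<beta><4. A \<beta> $i$j * pauli \<beta> $ r1 $ r2)" for i r1 j r2
    using ex2[of r1] ex2[of r2]
    by (auto simp: A_def sum4 sum2 pauli_ent pauli_Suc0 algebra_simps) (simp_all add: field_simps)
  have dec: "h = (\<Sum>\<alpha><4. kron (A \<alpha>) (pauli \<alpha>))"
  proof -
    have "h$p$q = (\<Sum>\<alpha><4. kron (A \<alpha>) (pauli \<alpha>))$p$q" for p q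
      using F1[of "fst p" "snd p" "fst q" "snd q"] by (simp add: sum_component kron_def)
    then show ?thesis by (simp add: vec_eq_iff)
  qed
  have HA: "hermitian (A \<beta>)" for \<beta>
    unfolding hermitian_def
  proof (intro allI)
    fix i j
    have "cnj (A \<beta> $ j $ i) = (\<Sum>r1\<in>UNIV. \<Sum>r2\<in>UNIV. cnj (h$(j,r1)$(i,r2)) * pauli \<beta> $ r1 $ r2) / 2"
      by (simp add: A_def cnj_sum)
    also have "\<dots> = (\<Sum>r1\<in>UNIV. \<Sum>r2\<in>UNIV. h$(i,r2)$(j,r1) * cnj (pauli \<beta> $ r2 $ r1)) / 2"
      proof -
        have pw: "cnj (h$(j,a)$(i,b)) * pauli \<beta> $ a $ b = h$(i,b)$(j,a) * cnj (pauli \<beta> $ b $ a)" for a b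
          using H[of "(i,b)" "(j,a)"] pauli_herm[of \<beta> a b] by simp
        show ?thesis by (simp only: pw)
      qed
    also have "\<dots> = A \<beta> $ i $ j"
      unfolding A_def vec_lambda_beta by (subst sum.swap) (rule refl)
    finally show "A \<beta> $ i $ j = cnj (A \<beta> $ j $ i)" by simp
  qed
  have G: "spectral_gap (A \<beta>) < \<eta>" if "\<beta> < 4" for \<beta>
  proof (rule ccontr)
    assume "\<not> spectral_gap (A \<beta>) < \<eta>"
    then have "gapped h \<eta>" unfolding gapped_def using dec that by (intro exI[of _ A]) auto
    then show False using assms(2) by contradiction
  qed
  define c where "c \<beta> = (Re (A \<beta> $0$0) + Re (A \<beta> $1$1)) / 2" for \<beta>
  define g :: qop where "g = (\<chi> r1 r2. \<Sum>\<beta><4. complex_of_real (c \<beta>) * pauli \<beta> $ r1 $ r2)"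
  have Hg: "hermitian g"
    unfolding hermitian_def
  proof (intro allI)
    fix i j
    show "g $ i $ j = cnj (g $ j $ i)"
      unfolding g_def by (simp add: cnj_sum pauli_herm[of _ i j])
  qed
  have Dent: "(h - kron (mat 1) g)$(i,r1)$(j,r2) =
      (\<Sum>\<beta><4. (A \<beta> $i$j - (if i = j then complex_of_real (c \<beta>) else 0)) * pauli \<beta> $ r1 $ r2)"
    for i r1 j r2
    by (simp add: kron_def mat_def g_def F1 sum_subtractf algebra_simps sum_distrib_left)
  have Bb: "cmod (A \<beta> $i$j - (if i = j then complex_of_real (c \<beta>) else 0)) < \<eta>/2"
    if "\<beta> < 4" for \<beta> i j
  proof -
    note gb = gap_bound[OF HA G[OF that]]
    have d0: "A \<beta> $0$0 = Re (A \<beta> $0$0)" "A \<beta> $1$1 = Re (A \<beta> $1$1)"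
      using herm_diag[OF HA] by auto
    have h10: "A \<beta> $1$0 = cnj (A \<beta> $0$1)"
      using HA[unfolded hermitian_def, rule_format, of \<beta> 1 0] .
    consider "i = 0" "j = 0" | "i = 0" "j = 1" | "i = 1" "j = 0" | "i = 1" "j = 1"
      using ex2[of i] ex2[of j] by blast
    then show ?thesis
    proof cases
      case 1
      have "A \<beta> $0$0 - complex_of_real (c \<beta>) = complex_of_real ((Re (A \<beta> $0$0) - Re (A \<beta> $1$1))/2)"
        (is "_ = complex_of_real ?x")
        by (subst d0(1)) (simp add: c_def field_simps)
      then have "cmod (A \<beta> $0$0 - complex_of_real (c \<beta>)) = \<bar>?x\<bar>" by (simp only: norm_of_real)
      then show ?thesis using 1 gb(2) by (simp add: abs_divide)
    next
      case 2 then show ?thesis using gb(1) by simp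
    next
      case 3 then show ?thesis using gb(1) h10 by simp
    next
      case 4
      have "A \<beta> $1$1 - complex_of_real (c \<beta>) = complex_of_real ((Re (A \<beta> $1$1) - Re (A \<beta> $0$0))/2)"
        (is "_ = complex_of_real ?x")
        by (subst d0(2)) (simp add: c_def field_simps)
      then have "cmod (A \<beta> $1$1 - complex_of_real (c \<beta>)) = \<bar>?x\<bar>" by (simp only: norm_of_real)
      then show ?thesis using 4 gb(2) by (simp add: abs_divide abs_minus_commute)
    qed
  qed
  have Db: "cmod ((h - kron (mat 1) g)$p$q) \<le> \<eta>" for p q
  proof -
    obtain i r1 j r2 where pq: "p = (i,r1)" "q = (j,r2)" using ex22 by metis
    have "cmod ((h - kron (mat 1) g)$p$q) < 2 * (\<eta>/2)"
      unfolding pq Dent by (rule pauli_sum_bound) (rule Bb)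
    then show ?thesis by simp
  qed
  have "opnorm (h - kron (mat 1) g) \<le> \<eta> * sqrt (real (CARD(2\<times>2) * CARD(2\<times>2)))"
    by (rule opnorm_entry_bound) (rule Db)
  also have "\<dots> = 4 * \<eta>" by simp
  finally show ?thesis using Hg by blast
qed

end
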